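(* Let $k\ge 1$ be an integer with $4\nmid k$ such that $\mathcal{D}:=(k^2+4)/\gcd(2,k)^2$ is squarefree, let $\alpha=\frac{k+\sqrt{k^2+4}}{2}$, let $p\ge 3$ be a prime and $\mathcal{F}_p(x)=x^{2p}-kx^p-1$. Then $p$ is a $k$-Wall-Sun-Sun prime if and only if $\mathcal{F}_p(\alpha)\equiv 0\pmod{p^2}$.
   Context: Let $(U_n)$ be defined by $U_0=0$, $U_1=1$, $U_n=kU_{n-1}+U_{n-2}$ for $n\ge 2$, and let $\pi(m)$ be the length of the period of $(U_n)$ modulo an integer $m\ge 2$. A prime $p$ is a $k$-Wall-Sun-Sun prime if $\pi(p^2)=\pi(p)$. Congruences involving $\alpha$ are taken in the ring of algebraic integers of $\mathbb{Q}(\sqrt{k^2+4})$: $x\equiv y\pmod{m}$ means $(x-y)/m$ is an algebraic integer. *)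

theory Defs
  imports "HOL-Computational_Algebra.Computational_Algebra" "HOL-Number_Theory.Number_Theory"
begin

fun U :: "int \<Rightarrow> nat \<Rightarrow> int" where
  "U k 0 = 0"
| "U k (Suc 0) = 1"
| "U k (Suc (Suc n)) = k * U k (Suc n) + U k n"

definition pisano :: "int \<Rightarrow> int \<Rightarrow> nat" where
  "pisano k m = (LEAST t. t > 0 \<and> (\<forall>j. [U k (j + t) = U k j] (mod m)))"

definition k_wall_sun_sun :: "int \<Rightarrow> nat \<Rightarrow> bool" where
  "k_wall_sun_sun k p \<longleftrightarrow> prime p \<and> pisano k (int p ^ 2) = pisano k (int p)"

end

theory Submission
  imports Defs
begin


locale wss =
  fixes k :: int
  assumes kpos: "k \<ge> 1"
begin

definition DD :: int where "DD = k^2 + 4"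
definition sq :: real where "sq = sqrt (of_int DD)"
definition al :: real where "al = (of_int k + sq) / 2"
definition be :: real where "be = of_int k - al"
definition Z :: "real \<Rightarrow> bool" where "Z x \<longleftrightarrow> (\<exists>a b. x = of_int a + of_int b * al)"
definition M :: "int \<Rightarrow> real \<Rightarrow> bool" where "M m x \<longleftrightarrow> (\<exists>z. Z z \<and> x = of_int m * z)"
definition cg :: "int \<Rightarrow> real \<Rightarrow> real \<Rightarrow> bool" where "cg m x y \<longleftrightarrow> M m (x - y)"

lemma DD_pos: "DD > 0" unfolding DD_def by (smt (verit) zero_le_power2)

lemma sq_sq: "sq^2 = of_int DD"
  unfolding sq_def using DD_pos by simp

lemma sq_eq: "sq = 2 * al - of_int k" unfolding al_def by (simp add: field_simps)

lemma al_sq: "al^2 = of_int k * al + 1"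
proof -
  have "al^2 = (of_int k ^2 + 2 * of_int k * sq + sq^2) / 4" unfolding al_def by (simp add: power2_eq_square field_simps)
  also have "\<dots> = of_int k * al + 1" unfolding sq_sq al_def DD_def by (simp add: field_simps power2_eq_square)
  finally show ?thesis .
qed

lemma al_be: "al * be = -1"
  unfolding be_def using al_sq by (simp add: algebra_simps power2_eq_square)

lemma be_sq: "be^2 = of_int k * be + 1"
  unfolding be_def using al_sq by (simp add: algebra_simps power2_eq_square)

lemma nonsquare: "DD * b^2 \<noteq> c^2" if "b \<noteq> 0" for b c :: int
proof
  assume h: "DD * b^2 = c^2"
  then have "c^2 = b^2 * DD" by (simp add: mult.commute)
  then have "b^2 dvd c^2" by simp
  then have "b dvd c" by simp
  then obtain e where e: "c = b * e" by blast
  with h that have De: "DD = e^2" by (simp add: power_mult_distrib)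
  define f where "f = \<bar>e\<bar>"
  have "DD = f^2" unfolding f_def De by simp
  have "f \<ge> 0" unfolding f_def by simp
  have "k^2 < f^2" using \<open>DD = f^2\<close> unfolding DD_def by simp
  have "k < f"
  proof (rule ccontr)
    assume "\<not> k < f"
    then have "f^2 \<le> k^2" using \<open>f \<ge> 0\<close> by (intro power_mono) auto
    then show False using \<open>k^2 < f^2\<close> by linarith
  qed
  have "f^2 < (k+2)^2" using \<open>DD = f^2\<close> kpos unfolding DD_def by (simp add: power2_eq_square algebra_simps)
  have "f < k + 2"
  proof (rule ccontr)
    assume "\<not> f < k + 2"
    then have "(k+2)^2 \<le> f^2" using kpos by (intro power_mono) auto
    then show False using \<open>f^2 < (k+2)^2\<close> by linarith
  qed
  then have "f = k + 1" using \<open>k < f\<close> by simp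
  then have "k^2 + 4 = (k+1)^2" using \<open>DD = f^2\<close> unfolding DD_def by simp
  then have "2*k = 3" using power2_sum[of k 1] by simp
  then show False by presburger
qed

lemma coord0: "of_int a + of_int b * al = 0 \<Longrightarrow> a = 0 \<and> b = 0"
proof -
  assume h: "of_int a + of_int b * al = 0"
  have b0: "b = 0"
  proof (rule ccontr)
    assume "b \<noteq> 0"
    from h have "of_int b * sq = - (2 * of_int a + of_int b * of_int k)"
      unfolding al_def by (simp add: field_simps)
    then have "(of_int b * sq)^2 = (- (2 * of_int a + of_int b * of_int k))^2" by simp
    then have "(of_int b * sq)^2 = (2 * of_int a + of_int b * of_int k)^2" by (simp only: power2_minus)
    then have "of_int (DD * b^2) = (of_int ((2 * a + b * k)^2) :: real)"
      by (simp add: power_mult_distrib sq_sq mult.commute)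
    then have "DD * b^2 = (2*a+b*k)^2" by linarith
    with nonsquare[OF \<open>b \<noteq> 0\<close>] show False by blast
  qed
  with h show ?thesis by simp
qed

lemma coord: "of_int a + of_int b * al = of_int c + of_int d * al \<Longrightarrow> a = c \<and> b = d"
proof -
  assume "of_int a + of_int b * al = of_int c + of_int d * al"
  then have "of_int (a - c) + of_int (b - d) * al = 0" by (simp add: algebra_simps)
  from coord0[OF this] show ?thesis by simp
qed


lemma Z_int[simp,intro]: "Z (of_int a)" unfolding Z_def by (rule exI[of _ a], rule exI[of _ 0]) simp
lemma Z_nat[simp,intro]: "Z (of_nat n)" using Z_int[of "int n"] by simp
lemma Z_0[simp,intro]: "Z 0" using Z_int[of 0] by simp
lemma Z_1[simp,intro]: "Z 1" using Z_int[of 1] by simp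
lemma Z_al[simp,intro]: "Z al" unfolding Z_def by (rule exI[of _ 0], rule exI[of _ 1]) simp
lemma Z_add[intro]: assumes "Z x" "Z y" shows "Z (x + y)"
proof -
  obtain a b c d where "x = of_int a + of_int b * al" "y = of_int c + of_int d * al"
    using assms unfolding Z_def by blast
  then have "x + y = of_int (a + c) + of_int (b + d) * al" by (simp add: algebra_simps)
  then show ?thesis unfolding Z_def by blast
qed
lemma Z_minus[intro]: assumes "Z x" shows "Z (- x)"
proof -
  obtain a b where "x = of_int a + of_int b * al" using assms unfolding Z_def by blast
  then have "- x = of_int (- a) + of_int (- b) * al" by (simp add: algebra_simps)
  then show ?thesis unfolding Z_def by blast
qed
lemma Z_diff[intro]: "Z x \<Longrightarrow> Z y \<Longrightarrow> Z (x - y)"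
  using Z_add[of x "-y"] Z_minus[of y] by simp
lemma Z_mult[intro]: "Z x \<Longrightarrow> Z y \<Longrightarrow> Z (x * y)"
proof -
  assume "Z x" "Z y"
  then obtain a b c d where x: "x = of_int a + of_int b * al" and y: "y = of_int c + of_int d * al"
    unfolding Z_def by blast
  have "x * y = of_int a * of_int c + (of_int a * of_int d + of_int b * of_int c) * al + of_int b * of_int d * al^2"
    unfolding x y by (simp add: algebra_simps power2_eq_square)
  also have "\<dots> = of_int (a*c + b*d) + of_int (a*d + b*c + k*b*d) * al"
    unfolding al_sq by (simp add: algebra_simps)
  finally show ?thesis unfolding Z_def by blast
qed
lemma Z_pow[intro]: "Z x \<Longrightarrow> Z (x ^ n)"
  by (induction n) auto
lemma Z_sum[intro]: "(\<And>i. i \<in> A \<Longrightarrow> Z (f i)) \<Longrightarrow> Z (sum f A)"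
  by (induction A rule: infinite_finite_induct) auto
lemma Z_be[simp,intro]: "Z be" unfolding be_def by auto
lemma Z_sq[simp,intro]: "Z sq" unfolding sq_eq using Z_diff[OF Z_mult[OF Z_int[of 2] Z_al] Z_int[of k]] by simp

lemma Z_coords: "Z x \<Longrightarrow> \<exists>a b. x = of_int a + of_int b * al" unfolding Z_def by blast

lemma M_Z: "M m x \<Longrightarrow> Z x" unfolding M_def by auto
lemma M_0[simp,intro]: "M m 0" unfolding M_def by (rule exI[of _ 0]) auto
lemma M_add[intro]: assumes "M m x" "M m y" shows "M m (x + y)"
proof -
  obtain z w where "Z z" "x = of_int m * z" "Z w" "y = of_int m * w" using assms unfolding M_def by blast
  then show ?thesis unfolding M_def by (intro exI[of _ "z + w"]) (auto simp: algebra_simps)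
qed
lemma M_minus[intro]: assumes "M m x" shows "M m (- x)"
proof -
  obtain z where "Z z" "x = of_int m * z" using assms unfolding M_def by blast
  then show ?thesis unfolding M_def by (intro exI[of _ "- z"]) auto
qed
lemma M_diff[intro]: "M m x \<Longrightarrow> M m y \<Longrightarrow> M m (x - y)"
  using M_add[of m x "-y"] M_minus[of m y] by simp
lemma M_multR[intro]: assumes "M m x" "Z y" shows "M m (x * y)"
proof -
  obtain z where "Z z" "x = of_int m * z" using assms unfolding M_def by blast
  then show ?thesis unfolding M_def using assms(2) by (intro exI[of _ "z * y"]) auto
qed
lemma M_multL[intro]: "M m x \<Longrightarrow> Z y \<Longrightarrow> M m (y * x)"
  using M_multR[of m x y] by (simp add: mult.commute)
lemma M_sum[intro]: "(\<And>i. i \<in> A \<Longrightarrow> M m (f i)) \<Longrightarrow> M m (sum f A)"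
  by (induction A rule: infinite_finite_induct) auto
lemma M_triv[intro]: "Z z \<Longrightarrow> M m (of_int m * z)" unfolding M_def by blast
lemma M_int[intro]: assumes "m dvd c" shows "M m (of_int c)"
proof -
  obtain e where "c = m * e" using assms by blast
  then show ?thesis unfolding M_def by (intro exI[of _ "of_int e"]) auto
qed
lemma M_dvd: assumes "m dvd n" "M n x" shows "M m x"
proof -
  obtain e where e: "n = m * e" using assms by blast
  obtain z where "Z z" "x = of_int n * z" using assms unfolding M_def by blast
  then show ?thesis unfolding M_def e by (intro exI[of _ "of_int e * z"]) auto
qed
lemma M_mult_M: assumes "M m x" "M n y" shows "M (m*n) (x*y)"
proof -
  obtain z w where "Z z" "x = of_int m * z" "Z w" "y = of_int n * w" using assms unfolding M_def by blast
  then show ?thesis unfolding M_def by (intro exI[of _ "z * w"]) (auto simp: algebra_simps)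
qed
lemma M_coords: "M m (of_int a + of_int b * al) \<Longrightarrow> m dvd a \<and> m dvd b"
proof -
  assume "M m (of_int a + of_int b * al)"
  then obtain z where z: "Z z" "of_int a + of_int b * al = of_int m * z" unfolding M_def by blast
  then obtain c d where "z = of_int c + of_int d * al" using Z_coords by blast
  with z have "of_int a + of_int b * al = of_int (m*c) + of_int (m*d) * al" by (simp add: algebra_simps)
  from coord[OF this] show ?thesis by simp
qed
lemma M_int_iff: "M m (of_int a) \<longleftrightarrow> m dvd a"
  using M_coords[of m a 0] by auto
lemma M_cancel: assumes "m \<noteq> 0" "M (m*m) (of_int m * x)" shows "M m x"
proof -
  obtain z where "Z z" "of_int m * x = of_int (m * m) * z" using assms unfolding M_def by blast
  then have "of_int m * x = of_int m * (of_int m * z)" by simp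
  then have "x = of_int m * z" using assms(1) by simp
  with \<open>Z z\<close> show ?thesis unfolding M_def by blast
qed
lemma M_prime_cancel:
  assumes "prime p" "\<not> p dvd c" "Z w" "M p (of_int c * w)"
  shows "M p w"
proof -
  obtain a b where w: "w = of_int a + of_int b * al" using Z_coords assms(3) by blast
  have "of_int c * w = of_int (c*a) + of_int (c*b) * al" unfolding w by (simp add: algebra_simps)
  with assms(4) have "p dvd c*a" "p dvd c*b" using M_coords by metis+
  then have "p dvd a" "p dvd b" using assms(1,2) prime_dvd_mult_iff by blast+
  then obtain a' b' where "a = p*a'" "b = p*b'" by (meson dvdE)
  then have "w = of_int p * (of_int a' + of_int b' * al)" unfolding w by (simp add: algebra_simps)
  then show ?thesis unfolding M_def Z_def by blast
qed

lemma cg_M: "cg m x 0 \<longleftrightarrow> M m x" unfolding cg_def by simp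
lemma cg_refl[simp,intro]: "cg m x x" unfolding cg_def by simp
lemma cg_sym: "cg m x y \<Longrightarrow> cg m y x" unfolding cg_def using M_minus by fastforce
lemma cg_trans: "cg m x y \<Longrightarrow> cg m y z \<Longrightarrow> cg m x z" unfolding cg_def using M_add by fastforce
lemma cg_add: "cg m x y \<Longrightarrow> cg m u v \<Longrightarrow> cg m (x + u) (y + v)"
  unfolding cg_def using M_add by (fastforce simp: algebra_simps)
lemma cg_diff: "cg m x y \<Longrightarrow> cg m u v \<Longrightarrow> cg m (x - u) (y - v)"
  unfolding cg_def using M_diff by (fastforce simp: algebra_simps)
lemma cg_mult: "cg m x y \<Longrightarrow> cg m u v \<Longrightarrow> Z u \<Longrightarrow> Z y \<Longrightarrow> cg m (x * u) (y * v)"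
proof -
  assume a: "cg m x y" "cg m u v" "Z u" "Z y"
  have "x * u - y * v = (x - y) * u + y * (u - v)" by (simp add: algebra_simps)
  moreover have "M m ((x - y) * u + y * (u - v))" using a unfolding cg_def by auto
  ultimately show ?thesis unfolding cg_def by simp
qed
lemma cg_multc: "cg m x y \<Longrightarrow> Z u \<Longrightarrow> cg m (u * x) (u * y)"
  unfolding cg_def by (metis M_multL right_diff_distrib)
lemma cg_pow: "cg m x y \<Longrightarrow> Z x \<Longrightarrow> Z y \<Longrightarrow> cg m (x ^ n) (y ^ n)"
  by (induction n) (auto intro: cg_mult)
lemma cg_dvd: "m dvd n \<Longrightarrow> cg n x y \<Longrightarrow> cg m x y" unfolding cg_def using M_dvd by blast
lemma cg_sum: "(\<And>i. i \<in> A \<Longrightarrow> cg m (f i) (g i)) \<Longrightarrow> cg m (sum f A) (sum g A)"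
  unfolding cg_def by (simp add: M_sum flip: sum_subtractf)
lemma cg_int: "[a = b] (mod m) \<Longrightarrow> cg m (of_int a) (of_int b)"
  unfolding cg_def by (metis M_int cong_iff_dvd_diff of_int_diff)
lemma cg_int_iff: "cg m (of_int a) (of_int b) \<longleftrightarrow> [a = b] (mod m)"
  unfolding cg_def by (metis M_int_iff cong_iff_dvd_diff of_int_diff)

lemma al_pow: "al ^ Suc n = of_int (U k (Suc n)) * al + of_int (U k n)"
proof (induction n)
  case 0 then show ?case by simp
next
  case (Suc n)
  have "al ^ Suc (Suc n) = al * (of_int (U k (Suc n)) * al + of_int (U k n))"
    using Suc by simp
  also have "\<dots> = of_int (U k (Suc n)) * al^2 + of_int (U k n) * al" by (simp add: algebra_simps power2_eq_square)
  also have "\<dots> = of_int (U k (Suc (Suc n))) * al + of_int (U k (Suc n))"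
    unfolding al_sq by (simp add: algebra_simps)
  finally show ?case .
qed

lemma be_pow: "be ^ Suc n = of_int (U k (Suc n)) * be + of_int (U k n)"
proof (induction n)
  case 0 then show ?case by simp
next
  case (Suc n)
  have "be ^ Suc (Suc n) = be * (of_int (U k (Suc n)) * be + of_int (U k n))"
    using Suc by simp
  also have "\<dots> = of_int (U k (Suc n)) * be^2 + of_int (U k n) * be" by (simp add: algebra_simps power2_eq_square)
  also have "\<dots> = of_int (U k (Suc (Suc n))) * be + of_int (U k (Suc n))"
    unfolding be_sq by (simp add: algebra_simps)
  finally show ?case .
qed


lemma M_intcoords: "m dvd a \<Longrightarrow> m dvd b \<Longrightarrow> M m (of_int a + of_int b * al)"
  by (intro M_add M_int M_multR) auto

lemma period_iff:
  assumes "n > 0"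
  shows "(\<forall>j. [U k (j + n) = U k j] (mod m)) \<longleftrightarrow> cg m (al^n) 1"
proof
  assume h: "\<forall>j. [U k (j + n) = U k j] (mod m)"
  obtain n' where n: "n = Suc n'" using assms by (cases n) auto
  have h0: "m dvd U k n" using h[rule_format, of 0] by (simp add: cong_iff_dvd_diff)
  have h1: "m dvd U k (Suc n) - 1" using h[rule_format, of 1] by (simp add: cong_iff_dvd_diff)
  have e: "U k n' - 1 = (U k (Suc n) - 1) - k * U k n" unfolding n by simp
  have h2: "m dvd U k n' - 1" unfolding e by (rule dvd_diff[OF h1 dvd_mult[OF h0]])
  have "al^n - 1 = of_int (U k n' - 1) + of_int (U k n) * al" unfolding n al_pow by simp
  then show "cg m (al^n) 1" unfolding cg_def using M_intcoords[OF h2 h0] by (simp add: algebra_simps)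
next
  assume h: "cg m (al^n) 1"
  show "\<forall>j. [U k (j + n) = U k j] (mod m)"
  proof
    fix j
    have "cg m (al^Suc j * al^n) (al^Suc j * 1)" by (rule cg_multc[OF h]) auto
    then have "M m (al^Suc (j + n) - al^Suc j)" unfolding cg_def by (simp add: power_add mult.assoc)
    moreover have "al^Suc (j + n) - al^Suc j = of_int (U k (j + n) - U k j) + of_int (U k (Suc (j + n)) - U k (Suc j)) * al"
      unfolding al_pow by (simp add: algebra_simps)
    ultimately have "m dvd U k (j + n) - U k j" using M_coords by metis
    then show "[U k (j + n) = U k j] (mod m)" by (simp add: cong_iff_dvd_diff)
  qed
qed

definition ordm :: "int \<Rightarrow> nat" where "ordm m = (LEAST n. 0 < n \<and> cg m (al^n) 1)"

lemma pisano_ordm: "pisano k m = ordm m"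
  unfolding pisano_def ordm_def using period_iff by metis

lemma ordm_props:
  assumes "0 < N" "cg m (al^N) 1"
  shows "0 < ordm m" "cg m (al^(ordm m)) 1"
proof -
  have "0 < ordm m \<and> cg m (al^(ordm m)) 1" unfolding ordm_def
    by (rule LeastI[of _ N]) (use assms in auto)
  then show "0 < ordm m" "cg m (al^(ordm m)) 1" by auto
qed

lemma ordm_dvd_iff:
  assumes "0 < N" "cg m (al^N) 1"
  shows "cg m (al^n) 1 \<longleftrightarrow> ordm m dvd n"
proof -
  note op = ordm_props[OF assms]
  define t where "t = ordm m"
  show ?thesis unfolding t_def[symmetric]
  proof
    assume "t dvd n"
    then obtain q where q: "n = t * q" by blast
    have "cg m ((al^t)^q) (1^q)" by (rule cg_pow) (use op t_def in auto)
    then show "cg m (al^n) 1" unfolding q by (simp add: power_mult)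
  next
    assume hn: "cg m (al^n) 1"
    define q r where "q = n div t" and "r = n mod t"
    have n: "n = t * q + r" unfolding q_def r_def by simp
    have "r < t" unfolding r_def using op t_def by simp
    have "cg m ((al^t)^q) (1^q)" by (rule cg_pow) (use op t_def in auto)
    then have "cg m ((al^t)^q * al^r) (1^q * al^r)" by (rule cg_mult) auto
    then have "cg m (al^n) (al^r)" unfolding n by (simp add: power_add power_mult)
    then have hr: "cg m (al^r) 1" using hn cg_sym cg_trans by blast
    have "r = 0"
    proof (rule ccontr)
      assume "r \<noteq> 0"
      then have "0 < r \<and> cg m (al^r) 1" using hr by auto
      moreover have "\<not> (0 < r \<and> cg m (al^r) 1)" unfolding t_def ordm_def
        by (rule not_less_Least) (use \<open>r < t\<close> t_def ordm_def in auto)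
      ultimately show False by blast
    qed
    then show "t dvd n" unfolding r_def by auto
  qed
qed

lemma lift:
  assumes "Z x" "Z y" "cg (int n) x y"
  shows "cg (int n * int n) (x^n) (y^n)"
proof -
  define S where "S = (\<Sum>i<n. y^(n - Suc i) * x^i)"
  have eq: "x^n - y^n = (x - y) * S" unfolding S_def by (rule power_diff_sumr2)
  have "cg (int n) S (\<Sum>i<n. y^(n - Suc i) * y^i)" unfolding S_def
    by (intro cg_sum cg_multc cg_pow) (use assms in auto)
  also have "(\<Sum>i<n. y^(n - Suc i) * y^i) = (\<Sum>i<n. y^(n - 1))"
    by (intro sum.cong refl) (auto simp flip: power_add)
  also have "\<dots> = of_int (int n) * y^(n-1)" by simp
  finally have "M (int n) S" unfolding cg_def
    by (metis M_triv M_add Z_pow assms(2) diff_add_cancel)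
  then have "M (int n * int n) ((x - y) * S)" using assms(3) unfolding cg_def by (rule M_mult_M[rotated])
  then show ?thesis unfolding cg_def eq .
qed

lemma M_Zcong: "cg m x y \<Longrightarrow> M m y \<Longrightarrow> M m x"
  unfolding cg_def by (metis M_add diff_add_cancel)

end

lemma fermat_int:
  fixes x :: int and p :: nat
  assumes "prime p"
  shows "[x ^ p = x] (mod int p)"
proof -
  define y where "y = nat (x mod int p)"
  have p0: "int p > 0" using assms prime_gt_0_nat by auto
  have xy: "[x = int y] (mod int p)" unfolding y_def using p0 by (simp add: cong_def)
  have "[y ^ p = y] (mod p)"
  proof (cases "p dvd y")
    case True
    then have "[y = 0] (mod p)" by (simp add: cong_0_iff)
    moreover then have "[y ^ p = 0 ^ p] (mod p)" by (rule cong_pow)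
    ultimately show ?thesis using assms prime_gt_0_nat by (metis cong_sym cong_trans power_0_left not_gr0)
  next
    case False
    then have "[y ^ (p - 1) = 1] (mod p)" by (rule fermat_theorem[OF assms])
    then have "[y ^ (p - 1) * y = 1 * y] (mod p)" by (rule cong_scalar_right)
    moreover have "y ^ (p - 1) * y = y ^ p" using assms prime_gt_0_nat
      by (metis Suc_diff_1 power_Suc2)
    ultimately show ?thesis by simp
  qed
  then have "[int y ^ p = int y] (mod int p)" by (metis cong_int_iff of_nat_power)
  moreover have "[x ^ p = int y ^ p] (mod int p)" by (rule cong_pow[OF xy])
  ultimately show ?thesis using xy cong_sym cong_trans by metis
qed


locale wssp = wss +
  fixes p :: nat
  assumes pprime: "prime p" and p3: "p \<ge> 3"
begin

definition T :: "nat \<Rightarrow> real" where "T i = of_nat (p choose i) * sq^i * of_int k^(p - i)"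

lemma binom_exp: "(2 * al)^p = (\<Sum>i\<le>p. T i)"
proof -
  have "2 * al = sq + of_int k" unfolding al_def by simp
  then show ?thesis unfolding T_def by (simp add: binomial_ring)
qed

lemma Z_T: "Z (T i)" unfolding T_def by (intro Z_mult Z_pow) auto

lemma T_mid: assumes "0 < i" "i < p" shows "M (int p) (T i)"
proof -
  have "p dvd (p choose i)" using dvd_choose_prime[of i p] assms pprime by auto
  then obtain c where c: "p choose i = p * c" by blast
  have "T i = of_int (int p) * (of_nat c * sq^i * of_int k^(p - i))" unfolding T_def c by simp
  then show ?thesis by (metis M_triv Z_T Z_mult Z_nat Z_pow Z_sq Z_int of_int_power)
qed

lemma p_pos: "p > 0" using p3 by simp
lemma p_odd: "odd p" using pprime p3 prime_odd_nat by auto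

lemma frob_raw: "cg (int p) ((2 * al)^p) (of_int (k^p) + sq^p)"
proof -
  obtain n where n: "p = Suc n" using p_pos by (cases p) auto
  have "(\<Sum>i\<le>p. T i) = T 0 + (\<Sum>i\<le>n. T (Suc i))" unfolding n by (rule sum.atMost_Suc_shift)
  also have "(\<Sum>i\<le>n. T (Suc i)) = (\<Sum>i<n. T (Suc i)) + T p"
    unfolding n by (simp flip: lessThan_Suc_atMost)
  finally have e: "(2 * al)^p = T 0 + (\<Sum>i<n. T (Suc i)) + T p" unfolding binom_exp by simp
  have "M (int p) (\<Sum>i<n. T (Suc i))" by (intro M_sum T_mid) (auto simp: n)
  moreover have "T 0 = of_int (k^p)" "T p = sq^p" unfolding T_def by simp_all
  ultimately show ?thesis unfolding cg_def e by simp
qed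

lemma sq_pow_odd: "sq^(2*m+1) = sq * of_int (DD^m)"
  by (simp add: power_mult sq_sq)

definition hp :: nat where "hp = (p - 1) div 2"
lemma p_hp: "p = 2 * hp + 1" unfolding hp_def using p_odd by presburger

definition eps :: int where "eps = Legendre DD (int p)"

lemma prime_P: "prime (int p)" using pprime by simp

lemma frob: "cg (int p) ((2 * al)^p) (of_int k + sq * of_int eps)"
proof -
  have "[eps = DD ^ hp] (mod int p)" unfolding eps_def hp_def
    using euler_criterion[OF pprime, of DD] p3 by simp
  then have c1: "cg (int p) (sq * of_int (DD^hp)) (sq * of_int eps)"
    by (intro cg_multc cg_int) (auto simp: cong_sym)
  have c2: "cg (int p) (of_int (k^p)) (of_int k)" by (rule cg_int[OF fermat_int[OF pprime]])
  have "sq^p = sq * of_int (DD^hp)" using sq_pow_odd[of hp] p_hp by metis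
  then have "cg (int p) ((2 * al)^p) (of_int (k^p) + sq * of_int (DD^hp))" using frob_raw by simp
  then show ?thesis using cg_trans cg_add[OF c2 c1] by blast
qed


end

context wss begin
lemma Z_numeral[simp,intro]: "Z (numeral n)" using Z_int[of "numeral n"] by simp
end

context wssp begin
lemma not3: "\<not> 3 dvd (k^2 + 4)"
proof
  assume h: "3 dvd (k^2 + 4)"
  define q r where "q = k div 3" and "r = k mod 3"
  have k: "k = 3 * q + r" unfolding q_def r_def by simp
  have r: "r = 0 \<or> r = 1 \<or> r = 2" unfolding r_def by auto
  have "k^2 + 4 = 3 * (3 * q^2 + 2 * q * r) + (r^2 + 4)" unfolding k by (simp add: power2_eq_square algebra_simps)
  with h have "3 dvd r^2 + 4" by (metis dvd_add_right_iff dvd_triv_left)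
  with r show False by auto
qed

lemma p5: assumes "int p dvd DD" shows "p \<ge> 5"
proof -
  have "p \<noteq> 3" using assms not3 unfolding DD_def by auto
  moreover have "p \<noteq> 4" using p_odd by auto
  ultimately show ?thesis using p3 by linarith
qed

lemma fine:
  assumes "int p dvd DD"
  shows "cg (int p * int p) ((2*al)^p) (of_int (k^p) + of_int (int p * k^(p-1)) * sq)"
proof -
  have p5: "p \<ge> 5" by (rule p5[OF assms])
  obtain d where d: "DD = int p * d" using assms by blast
  have "p = Suc (Suc (p - 2))" using p5 by simp
  then obtain n where n: "p = Suc (Suc n)" by blast
  have "(\<Sum>i\<le>p. T i) = T 0 + (\<Sum>i\<le>Suc n. T (Suc i))" unfolding n by (rule sum.atMost_Suc_shift)
  also have "(\<Sum>i\<le>Suc n. T (Suc i)) = T 1 + (\<Sum>i\<le>n. T (Suc (Suc i)))" by (subst sum.atMost_Suc_shift) simp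
  finally have e: "(2 * al)^p = T 0 + T 1 + (\<Sum>i\<le>n. T (Suc (Suc i)))" unfolding binom_exp by simp
  have "M (int p * int p) (T (Suc (Suc i)))" if "i \<le> n" for i
  proof (cases "i = n")
    case True
    have "T (Suc (Suc i)) = sq^p" unfolding T_def True n[symmetric] by simp
    also have "\<dots> = sq^(p - 4) * (sq^2)^2"
    proof -
      have "p = (p - 4) + 2 * 2" using p5 by simp
      then show ?thesis by (metis power_add power_mult)
    qed
    also have "\<dots> = of_int (int p * int p) * (of_int (d^2) * sq^(p-4))" unfolding sq_sq d by (simp add: power2_eq_square)
    finally show ?thesis by (metis M_triv Z_mult Z_int Z_pow Z_sq)
  next
    case False
    then have "Suc (Suc i) < p" using that n by simp
    then have "p dvd (p choose Suc (Suc i))" using dvd_choose_prime[of "Suc (Suc i)" p] pprime by auto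
    then obtain c where c: "p choose Suc (Suc i) = p * c" by blast
    have s2: "sq^(Suc (Suc i)) = sq^i * of_int DD" by (metis add_2_eq_Suc' power_add sq_sq)
    have "T (Suc (Suc i)) = of_nat (p * c) * (sq^i * of_int DD) * of_int k^(p - Suc (Suc i))"
      unfolding T_def c s2 ..
    also have "\<dots> = of_int (int p * int p) * (of_nat c * of_int d * sq^i * of_int k^(p - Suc (Suc i)))"
      unfolding d by (simp add: algebra_simps)
    finally show ?thesis by (metis M_triv Z_mult Z_int Z_nat Z_pow Z_sq of_int_power)
  qed
  then have "M (int p * int p) (\<Sum>i\<le>n. T (Suc (Suc i)))" by (intro M_sum) auto
  moreover have "T 0 = of_int (k^p)" "T 1 = of_int (int p * k^(p-1)) * sq" unfolding T_def by simp_all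
  ultimately show ?thesis unfolding cg_def e by simp
qed

lemma hensel:
  assumes "Z r" "r^2 - of_int k * r - 1 = 0" "(2 * r - of_int k)^2 = of_int DD" "\<not> int p dvd DD"
    and "Z y" "cg (int p) y r"
  shows "cg (int p * int p) y r \<longleftrightarrow> M (int p * int p) (y^2 - of_int k * y - 1)"
proof
  assume "cg (int p * int p) y r"
  moreover have "Z (y + r - of_int k)" using assms by auto
  ultimately have "M (int p * int p) ((y - r) * (y + r - of_int k))" unfolding cg_def by (rule M_multR)
  moreover have "(y - r) * (y + r - of_int k) = y^2 - of_int k * y - 1"
    using assms(2) by (simp add: algebra_simps power2_eq_square)
  ultimately show "M (int p * int p) (y^2 - of_int k * y - 1)" by simp
next
  assume h: "M (int p * int p) (y^2 - of_int k * y - 1)"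
  obtain w where w: "Z w" "y - r = of_int (int p) * w" using assms(6) unfolding cg_def M_def by blast
  have y: "y = r + of_int (int p) * w" using w by simp
  have "y^2 - of_int k * y - 1 = of_int (int p) * (w * (2 * r - of_int k)) + of_int (int p * int p) * w^2"
    unfolding y using assms(2) by (simp add: algebra_simps power2_eq_square)
  with h have "M (int p * int p) (of_int (int p) * (w * (2 * r - of_int k)))"
    by (metis M_diff M_triv Z_pow w(1) add_diff_cancel_right')
  then have "M (int p) (w * (2 * r - of_int k))" by (rule M_cancel[rotated]) (use p_pos in auto)
  moreover have "Z (2 * r - of_int k)" using assms(1) by auto
  ultimately have "M (int p) ((w * (2 * r - of_int k)) * (2 * r - of_int k))" by (rule M_multR)
  moreover have "(w * (2 * r - of_int k)) * (2 * r - of_int k) = of_int DD * w"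
    using assms(3) by (simp add: power2_eq_square mult.commute mult.left_commute)
  ultimately have "M (int p) (of_int DD * w)" by simp
  then have "M (int p) w" by (rule M_prime_cancel[OF prime_P assms(4) w(1)])
  moreover have "M (int p) (of_int (int p))" using M_int[of "int p" "int p"] by simp
  ultimately have "M (int p * int p) (of_int (int p) * w)" using M_mult_M by (metis mult.commute)
  then show "cg (int p * int p) y r" unfolding cg_def w(2) .
qed

lemma ord_exists: "0 < N \<Longrightarrow> cg (int p) (al^N) 1 \<Longrightarrow> cg (int p * int p) (al^(N * p)) 1"
  using lift[of "al^N" 1 p] Z_pow[OF Z_al, of N] by (simp add: power_mult)

lemma KL:
  assumes "0 < N" "cg (int p) (al^N) 1" "\<not> p dvd N"
  shows "ordm (int p * int p) = ordm (int p) \<longleftrightarrow> cg (int p * int p) (al^N) 1"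
proof -
  define t t2 where "t = ordm (int p)" and "t2 = ordm (int p * int p)"
  have N2a: "0 < N * p" using assms(1) p_pos by simp
  have N2b: "cg (int p * int p) (al^(N * p)) 1" by (rule ord_exists[OF assms(1,2)])
  note o1 = ordm_props[OF assms(1,2)] and o2 = ordm_props[OF N2a N2b]
  note d1 = ordm_dvd_iff[OF assms(1,2)] and d2 = ordm_dvd_iff[OF N2a N2b]
  have "cg (int p) (al^t2) 1" unfolding t2_def by (rule cg_dvd[OF _ o2(2)]) simp
  then have tt2: "t dvd t2" using d1[of t2] unfolding t_def by simp
  have "cg (int p * int p) (al^(t * p)) 1" unfolding t_def by (rule ord_exists[OF o1(1) o1(2)])
  then have t2tp: "t2 dvd t * p" using d2[of "t * p"] unfolding t2_def by simp
  have "t2 = t \<longleftrightarrow> cg (int p * int p) (al^N) 1"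
  proof
    assume "t2 = t"
    moreover have "t dvd N" using d1[of N] assms(2) unfolding t_def by simp
    ultimately show "cg (int p * int p) (al^N) 1" using d2[of N] unfolding t2_def by simp
  next
    assume "cg (int p * int p) (al^N) 1"
    then have t2N: "t2 dvd N" using d2[of N] unfolding t2_def by simp
    obtain e where e: "t2 = t * e" using tt2 by blast
    have "t > 0" using o1 unfolding t_def by simp
    then have "e dvd p" using t2tp unfolding e by simp
    then have "e = 1 \<or> e = p" using pprime prime_nat_iff by blast
    moreover have "e \<noteq> p"
    proof
      assume "e = p"
      then have "p dvd t2" unfolding e by simp
      then have "p dvd N" using t2N by (rule dvd_trans)
      then show False using assms(3) by simp
    qed
    ultimately show "t2 = t" using e by simp
  qed
  then show ?thesis unfolding t_def t2_def .
qed

lemma cancel2: assumes "cg (int p) (2 * x) (2 * z)" "Z x" "Z z" shows "cg (int p) x z"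
proof -
  have "M (int p) (of_int 2 * (x - z))" using assms(1) unfolding cg_def by (simp add: algebra_simps)
  moreover have "\<not> int p dvd 2"
  proof
    assume "int p dvd 2"
    then have "int p \<le> 2" by (rule zdvd_imp_le) simp
    with p3 show False by simp
  qed
  ultimately show ?thesis unfolding cg_def using M_prime_cancel[OF prime_P] assms by blast
qed

lemma two_pow: "cg (int p) ((2 * al)^p) (2 * al^p)"
proof -
  have "cg (int p) (of_int (2^p)) (of_int 2)" by (rule cg_int[OF fermat_int[OF pprime]])
  then have "cg (int p) (of_int (2^p) * al^p) (of_int 2 * al^p)" by (rule cg_mult) auto
  then show ?thesis by (simp add: power_mult_distrib)
qed


end

context wssp begin

abbreviation "P \<equiv> int p"
definition G :: real where "G = (al^p)^2 - of_int k * al^p - 1"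

lemma Z_alp: "Z (al^p)" by auto

lemma al_pow_p: "al^p = al * al^(p-1)" using p_pos by (metis Suc_diff_1 power_Suc)

lemma case_pos:
  assumes "eps = 1"
  shows "ordm (P * P) = ordm P \<longleftrightarrow> M (P * P) G"
proof -
  have ndvd: "\<not> P dvd DD" using assms unfolding eps_def Legendre_def by (auto simp: cong_0_iff)
  have "cg P ((2 * al)^p) (of_int k + sq)" using frob assms by simp
  moreover have "of_int k + sq = 2 * al" unfolding al_def by simp
  ultimately have "cg P (2 * al^p) (2 * al)" using two_pow cg_sym cg_trans by metis
  then have hy: "cg P (al^p) al" by (rule cancel2) auto
  have e1: "al^(p-1) = (- be) * al^p" by (simp add: al_pow_p mult.assoc[symmetric] mult.commute[of be al] al_be)
  have e2: "(- be) * al = 1" using al_be by (simp add: algebra_simps)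
  have "cg P ((- be) * al^p) ((- be) * al)" by (rule cg_multc[OF hy]) auto
  then have c1: "cg P (al^(p-1)) 1" unfolding e1 e2 .
  have "0 < p - 1" using p3 by simp
  have n1: "\<not> p dvd (p - 1)"
  proof
    assume "p dvd p - 1"
    then have "p \<le> p - 1" using \<open>0 < p - 1\<close> by (rule dvd_imp_le)
    with p_pos show False by simp
  qed
  note kl = KL[OF \<open>0 < p - 1\<close> c1 n1]
  have A: "cg (P * P) (al^(p-1)) 1 \<longleftrightarrow> cg (P * P) (al^p) al"
  proof
    assume "cg (P * P) (al^(p-1)) 1"
    then have "cg (P * P) (al * al^(p-1)) (al * 1)" by (rule cg_multc) auto
    then show "cg (P * P) (al^p) al" unfolding al_pow_p by simp
  next
    assume "cg (P * P) (al^p) al"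
    then have "cg (P * P) ((- be) * al^p) ((- be) * al)" by (rule cg_multc) auto
    then show "cg (P * P) (al^(p-1)) 1" unfolding e1 e2 .
  qed
  have B: "cg (P * P) (al^p) al \<longleftrightarrow> M (P * P) G" unfolding G_def
    by (rule hensel[OF Z_al _ _ ndvd Z_alp hy]) (use al_sq sq_sq sq_eq in auto)
  show ?thesis using kl A B by simp
qed

lemma case_neg:
  assumes "eps = -1"
  shows "ordm (P * P) = ordm P \<longleftrightarrow> M (P * P) G"
proof -
  have ndvd: "\<not> P dvd DD" using assms unfolding eps_def Legendre_def by (auto simp: cong_0_iff)
  have "cg P ((2 * al)^p) (of_int k - sq)" using frob assms by simp
  moreover have "of_int k - sq = 2 * be" unfolding be_def al_def by (simp add: field_simps)
  ultimately have "cg P (2 * al^p) (2 * be)" using two_pow cg_sym cg_trans by metis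
  then have hy: "cg P (al^p) be" by (rule cancel2) auto
  have e1: "al^(p+1) = al * al^p" by simp
  have e2: "(- be) * al^(p+1) = al^p" by (simp add: mult.assoc[symmetric] mult.commute[of be al] al_be)
  have "cg P (al * al^p) (al * be)" by (rule cg_multc[OF hy]) auto
  then have c0: "cg P (al^(p+1)) (-1)" unfolding e1 al_be .
  have eq2: "(al^(p+1))^2 = al^(2*(p+1))" by (simp only: mult.commute[of 2 "p+1"] power_mult)
  have "cg P ((al^(p+1))^2) ((-1)^2)" by (rule cg_pow[OF c0]) auto
  then have c1: "cg P (al^(2*(p+1))) 1" by (simp only: eq2 power2_minus one_power2)
  have n1: "\<not> p dvd 2*(p+1)"
  proof
    assume "p dvd 2*(p+1)"
    then have "p dvd 2*p + 2" by simp
    moreover have "p dvd 2*p" by simp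
    ultimately have "p dvd 2" using dvd_add_right_iff by blast
    then show False using dvd_imp_le[of p 2] p3 by simp
  qed
  have "0 < 2*(p+1)" by simp
  note kl = KL[OF this c1 n1]
  have A: "cg (P * P) (al^(2*(p+1))) 1 \<longleftrightarrow> cg (P * P) (al^(p+1)) (-1)"
  proof
    assume "cg (P * P) (al^(p+1)) (-1)"
    then have "cg (P * P) ((al^(p+1))^2) ((-1)^2)" by (rule cg_pow) auto
    then show "cg (P * P) (al^(2*(p+1))) 1" by (simp only: eq2 power2_minus one_power2)
  next
    assume h: "cg (P * P) (al^(2*(p+1))) 1"
    define x where "x = al^(p+1)"
    obtain w where w: "Z w" "x - (-1) = of_int P * w" using c0 unfolding cg_def M_def x_def by blast
    have x1: "x + 1 = of_int P * w" using w(2) by simp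
    have i1: "(x + 1) * (x + 1) - (x^2 - 1) = 2 * (x + 1)" by (simp add: power2_eq_square algebra_simps)
    have i2: "2 * (x + 1) = of_int P * (2 * w)" unfolding x1 by simp
    have id: "of_int P * (2 * w) = (x + 1) * (x + 1) - (x^2 - 1)" using i1 i2 by simp
    have "(x + 1) * (x + 1) = of_int (P * P) * (w * w)" unfolding x1 by (simp add: algebra_simps)
    then have "M (P * P) ((x + 1) * (x + 1))" using M_triv[of "w * w" "P * P"] w(1) by auto
    moreover have "M (P * P) (x^2 - 1)" using h unfolding cg_def x_def eq2 .
    ultimately have "M (P * P) (of_int P * (2 * w))" unfolding id by (rule M_diff)
    then have "M P (2 * w)" by (rule M_cancel[rotated]) (use p_pos in auto)
    then have "M P (of_int 2 * w)" by simp
    moreover have "\<not> P dvd 2"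
    proof
      assume "P dvd 2"
      then have "P \<le> 2" by (rule zdvd_imp_le) simp
      with p3 show False by simp
    qed
    ultimately have "M P w" using M_prime_cancel[OF prime_P] w(1) by blast
    moreover have "M P (of_int P)" using M_int[of P P] by simp
    ultimately have "M (P * P) (of_int P * w)" using M_mult_M by (metis mult.commute)
    then show "cg (P * P) (al^(p+1)) (-1)" unfolding cg_def x_def[symmetric] w(2) .
  qed
  have B: "cg (P * P) (al^(p+1)) (-1) \<longleftrightarrow> cg (P * P) (al^p) be"
  proof
    assume "cg (P * P) (al^(p+1)) (-1)"
    then have "cg (P * P) ((- be) * al^(p+1)) ((- be) * (-1))" by (rule cg_multc) auto
    then show "cg (P * P) (al^p) be" unfolding e2 by simp
  next
    assume "cg (P * P) (al^p) be"
    then have "cg (P * P) (al * al^p) (al * be)" by (rule cg_multc) auto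
    then show "cg (P * P) (al^(p+1)) (-1)" unfolding e1 al_be .
  qed
  have C: "cg (P * P) (al^p) be \<longleftrightarrow> M (P * P) G" unfolding G_def
  proof (rule hensel[OF Z_be _ _ ndvd Z_alp hy])
    show "be^2 - of_int k * be - 1 = 0" using be_sq by simp
    have "2 * be - of_int k = - sq" unfolding be_def sq_eq by simp
    then show "(2 * be - of_int k)^2 = of_int DD" using sq_sq by simp
  qed
  show ?thesis using kl A B C by simp
qed

end

context wssp begin

lemma case_zero:
  assumes pD: "P dvd DD" and nsq: "\<not> (P * P) dvd DD"
  shows "ordm (P * P) \<noteq> ordm P" "\<not> M (P * P) G"
proof -
  have p5: "p \<ge> 5" by (rule p5[OF pD])
  obtain n where n: "p = Suc n" using p_pos by (cases p) auto
  have yU: "al^p = of_int (U k p) * al + of_int (U k n)" unfolding n by (rule al_pow)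
  have hf: "cg (P * P) ((2 * al)^p) (of_int (k^p) + of_int (P * k^(p-1)) * sq)" by (rule fine[OF pD])
  have e2: "(2 * al)^p = of_int (2^p) * al^p" by (simp add: power_mult_distrib)
  have nP2: "\<not> P dvd 2"
  proof
    assume "P dvd 2"
    then have "P \<le> 2" by (rule zdvd_imp_le) simp
    with p3 show False by simp
  qed
  have nP4: "\<not> P dvd 4"
  proof
    assume "P dvd 4"
    then have "P \<le> 4" by (rule zdvd_imp_le) simp
    with p5 show False by simp
  qed
  have notU: "\<not> (P * P) dvd U k p"
  proof
    assume hU: "(P * P) dvd U k p"
    have "(2 * al)^p - (of_int (k^p) + of_int (P * k^(p-1)) * sq)
        = of_int (2^p * U k n - k^p + P * k^(p-1) * k) + of_int (2^p * U k p - 2 * (P * k^(p-1))) * al"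
      unfolding e2 yU sq_eq by (simp add: algebra_simps)
    with hf have "(P * P) dvd 2^p * U k p - 2 * (P * k^(p-1))"
      unfolding cg_def using M_coords by metis
    moreover have "(P * P) dvd 2^p * U k p" using hU by simp
    ultimately have "(P * P) dvd P * (2 * k^(p-1))" by (metis dvd_diff_right_iff mult.left_commute)
    then have "P dvd 2 * k^(p-1)" using p_pos by simp
    then have "P dvd k^(p-1)" using nP2 prime_P prime_dvd_mult_iff by blast
    then have "P dvd k" using prime_P prime_dvd_power by blast
    then have "P dvd k^2" by (simp add: power2_eq_square)
    then have "P dvd DD - k^2" using pD by (rule dvd_diff[rotated])
    then have "P dvd 4" unfolding DD_def by simp
    with nP4 show False ..
  qed
  define h :: int where "h = int ((p + 1) div 2)"
  have hn: "2 * ((p + 1) div 2) = p + 1" using p_odd by presburger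
  have h2: "2 * h = P + 1" unfolding h_def using arg_cong[OF hn, of int] by simp
  define c where "c = (h * k)^p"
  have "Z (of_int (k^(p-1)) * sq)" by auto
  then have "M P (of_int (P * k^(p-1)) * sq)" 
    using M_triv[of "of_int (k^(p-1)) * sq" "P"] by (simp add: mult.assoc)
  then have "cg P (of_int (k^p) + of_int (P * k^(p-1)) * sq) (of_int (k^p))" unfolding cg_def by simp
  moreover have "cg P ((2 * al)^p) (of_int (k^p) + of_int (P * k^(p-1)) * sq)"
    by (rule cg_dvd[OF _ hf]) simp
  ultimately have "cg P ((2 * al)^p) (of_int (k^p))" using cg_trans by blast
  then have cA: "cg P (of_int (h^p) * (2 * al)^p) (of_int (h^p) * of_int (k^p))" by (rule cg_multc) auto
  have cB: "of_int (h^p) * (2 * al)^p = of_int ((2 * h)^p) * al^p" by (simp add: power_mult_distrib)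
  have cC: "of_int (h^p) * of_int (k^p) = (of_int c :: real)" unfolding c_def by (simp add: power_mult_distrib)
  have c1: "cg P (of_int ((2 * h)^p) * al^p) (of_int c)" using cA unfolding cB cC .
  have "[(2 * h)^p = 1^p] (mod P)" unfolding h2 by (rule cong_pow) (simp add: cong_def)
  then have "cg P (of_int ((2 * h)^p)) (of_int 1)" by (intro cg_int) simp
  then have "cg P (of_int ((2 * h)^p) * al^p) (of_int 1 * al^p)" by (rule cg_mult) auto
  then have "cg P (of_int 1 * al^p) (of_int c)" by (rule cg_trans[OF cg_sym c1])
  then have hy: "cg P (al^p) (of_int c)" by simp
  have "[c = h * k] (mod P)" unfolding c_def by (rule fermat_int[OF pprime])
  then have "[2 * c - k = 2 * (h * k) - k] (mod P)" by (intro cong_diff cong_mult) auto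
  moreover have "2 * (h * k) - k = P * k"
  proof -
    have "2 * (h * k) - k = (2 * h) * k - k" by (simp add: mult.assoc)
    also have "\<dots> = P * k" unfolding h2 by (simp add: algebra_simps)
    finally show ?thesis .
  qed
  ultimately have "[2 * c - k = P * k] (mod P)" by simp
  then have "P dvd 2 * c - k \<longleftrightarrow> P dvd P * k" by (rule cong_dvd_iff)
  then have "P dvd 2 * c - k" by simp
  then obtain e where e: "2 * c - k = P * e" by blast
  have "(h * k)^2 + 1 = h^2 * DD - P * (P + 2)"
  proof -
    have "(h * k)^2 + 1 = h^2 * (k^2 + 4) - (2 * h)^2 + 1" by (simp add: power2_eq_square algebra_simps)
    also have "\<dots> = h^2 * DD - P * (P + 2)" unfolding h2 DD_def by (simp add: power2_eq_square algebra_simps)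
    finally show ?thesis .
  qed
  then have "P dvd (h * k)^2 + 1" using pD by simp
  then have "[(h * k)^2 = -1] (mod P)" by (simp add: cong_iff_dvd_diff)
  then have "[((h * k)^2)^2 = (-1)^2] (mod P)" by (rule cong_pow)
  then have "[((h * k)^2)^2 = 1] (mod P)" by simp
  then have "[(((h * k)^2)^2)^p = 1^p] (mod P)" by (rule cong_pow)
  moreover have "c^4 = (((h * k)^2)^2)^p" unfolding c_def power_mult[symmetric] by (simp add: ac_simps)
  ultimately have c4: "[c^4 = 1] (mod P)" by simp
  have ncP: "\<not> P dvd c"
  proof
    assume "P dvd c"
    then have "P dvd c^4" unfolding power4_eq_xxxx by simp
    moreover have "P dvd c^4 - 1" using c4 by (simp add: cong_iff_dvd_diff)
    ultimately have "P dvd c^4 - (c^4 - 1)" by (rule dvd_diff)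
    then have "P dvd 1" by simp
    then show False using prime_P by simp
  qed
  have "cg P ((al^p)^4) ((of_int c)^4)" by (rule cg_pow[OF hy]) auto
  moreover have "cg P ((of_int c)^4) 1" using cg_int[OF c4] by simp
  ultimately have "cg P ((al^p)^4) 1" by (rule cg_trans)
  moreover have eq4: "(al^p)^4 = al^(4 * p)" using power_mult[of al p 4] by (simp add: mult.commute)
  ultimately have N4: "cg P (al^(4 * p)) 1" by simp
  have N0: "0 < 4 * p" using p_pos by simp
  show "ordm (P * P) \<noteq> ordm P"
  proof
    assume W: "ordm (P * P) = ordm P"
    have N2b: "cg (P * P) (al^(4 * p * p)) 1" by (rule ord_exists[OF N0 N4])
    have N2a: "0 < 4 * p * p" using p_pos by simp
    have "ordm P dvd 4 * p" using ordm_dvd_iff[OF N0 N4] N4 by simp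
    then have "ordm (P * P) dvd 4 * p" using W by simp
    then have "cg (P * P) (al^(4 * p)) 1" using ordm_dvd_iff[OF N2a N2b] by simp
    then have y4: "M (P * P) ((al^p)^4 - 1)" unfolding cg_def eq4 .
    obtain w where w: "Z w" "al^p - of_int c = of_int P * w" using hy unfolding cg_def M_def by blast
    have yw: "al^p = of_int c + of_int P * w" using w(2) by simp
    obtain w0 w1 where w01: "w = of_int w0 + of_int w1 * al" using Z_coords[OF w(1)] by blast
    define R where "R = 6 * of_int c^2 * w^2 + 4 * of_int c * of_int P * w^3 + of_int P^2 * w^4"
    define Q where "Q = of_int (c^4 - 1) + of_int P * (of_int (4 * c^3) * w)"
    have id4: "(a + x)^4 = a^4 + 4 * a^3 * x + x^2 * (6 * a^2 + 4 * a * x + x^2)" for a x :: real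
      by (simp add: power2_eq_square power3_eq_cube power4_eq_xxxx algebra_simps)
    have "(al^p)^4 - 1 = Q + of_int (P * P) * R"
      unfolding yw id4 Q_def R_def by (simp add: power2_eq_square power3_eq_cube power4_eq_xxxx algebra_simps)
    then have "Q = ((al^p)^4 - 1) - of_int (P * P) * R" by simp
    moreover have zR: "Z R" unfolding R_def by (intro Z_add Z_mult Z_pow Z_int Z_nat Z_numeral w(1))
    ultimately have "M (P * P) Q" using M_diff[OF y4 M_triv[OF zR, of "P * P"]] by simp
    moreover have "Q = of_int (c^4 - 1 + P * (4 * c^3 * w0)) + of_int (P * (4 * c^3 * w1)) * al"
      unfolding Q_def w01 by (simp add: algebra_simps)
    ultimately have "M (P * P) (of_int (c^4 - 1 + P * (4 * c^3 * w0)) + of_int (P * (4 * c^3 * w1)) * al)" by simp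
    then have "P * P dvd P * (4 * c^3 * w1)" using M_coords by blast
    then have "P dvd 4 * c^3 * w1" using p_pos by simp
    moreover have "\<not> P dvd 4 * c^3"
    proof
      assume "P dvd 4 * c^3"
      then have "P dvd 4 \<or> P dvd c^3" using prime_P prime_dvd_mult_iff by blast
      then show False using nP4 ncP prime_dvd_power[OF prime_P] by blast
    qed
    ultimately have "P dvd w1" using prime_P prime_dvd_mult_iff by blast
    then obtain v where v: "w1 = P * v" by blast
    have "al^p = of_int (c + P * w0) + of_int (P * w1) * al" unfolding yw w01 by (simp add: algebra_simps)
    then have "of_int (U k n) + of_int (U k p) * al = of_int (c + P * w0) + of_int (P * w1) * al"
      using yU by (simp add: add.commute)
    then have "U k p = P * w1" using coord by blast
    then have "(P * P) dvd U k p" unfolding v by simp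
    with notU show False ..
  qed
  show "\<not> M (P * P) G"
  proof
    assume hG: "M (P * P) G"
    obtain w where w: "Z w" "al^p - of_int c = of_int P * w" using hy unfolding cg_def M_def by blast
    have yw: "al^p = of_int c + of_int P * w" using w(2) by simp
    have "2 * al^p - of_int k = of_int (2 * c - k) + of_int P * (2 * w)" unfolding yw by (simp add: algebra_simps)
    also have "\<dots> = of_int P * (of_int e + 2 * w)" unfolding e by (simp add: algebra_simps)
    finally have "2 * al^p - of_int k = of_int P * (of_int e + 2 * w)" .
    then have "(2 * al^p - of_int k)^2 = of_int (P * P) * (of_int e + 2 * w)^2" by (simp add: power_mult_distrib power2_eq_square)
    moreover have zz: "Z ((of_int e + 2 * w)^2)" using w(1) by auto
    ultimately have m1: "M (P * P) ((2 * al^p - of_int k)^2)" using M_triv[OF zz, of "P * P"] by simp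
    have "of_int DD = (2 * al^p - of_int k)^2 - 4 * G"
      unfolding G_def DD_def by (simp add: power2_eq_square algebra_simps)
    moreover have "M (P * P) (4 * G)" by (rule M_multL[OF hG]) simp
    ultimately have "M (P * P) (of_int DD)" using M_diff[OF m1] by simp
    then have "(P * P) dvd DD" by (simp add: M_int_iff)
    with nsq show False ..
  qed
qed

end

context wss begin

lemma Z_Ints: "c \<in> \<int> \<Longrightarrow> Z c" by (auto elim: Ints_cases)

lemma Z_alg: assumes "Z x" shows "algebraic_int x"
proof -
  obtain a b where x: "x = of_int a + of_int b * al" using Z_coords[OF assms] by blast
  define q :: "real poly" where "q = [:of_int (a^2 + a*b*k - b^2), - of_int (2*a + b*k), 1:]"
  have "poly q x = x^2 - of_int (2*a + b*k) * x + of_int (a^2 + a*b*k - b^2)"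
    unfolding q_def by (simp add: algebra_simps power2_eq_square)
  also have "\<dots> = of_int b ^ 2 * (al^2 - of_int k * al - 1)"
    unfolding x by (simp add: algebra_simps power2_eq_square)
  also have "\<dots> = 0" using al_sq by simp
  finally have "poly q x = 0" .
  moreover have "lead_coeff q = 1" unfolding q_def by simp
  moreover have "\<forall>i. Polynomial.coeff q i \<in> \<int>" unfolding q_def by (auto simp: coeff_pCons split: nat.splits)
  ultimately show ?thesis by (intro algebraic_int.intros[of q]) auto
qed

lemma alg_unit:
  assumes alg: "algebraic_int (of_int a / of_int b * w)" and b0: "b > 0" and cop: "coprime a b"
    and w: "Z w" "Z w'" "w * w' = 1"
  shows "b = 1"
proof -
  define x where "x = of_int a / of_int b * w"
  obtain q where q: "lead_coeff q = 1" "\<forall>i. Polynomial.coeff q i \<in> \<int>" "poly q x = 0"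
    using alg unfolding x_def[symmetric] by (auto elim: algebraic_int.cases)
  define n where "n = degree q"
  have bnz: "(of_int b :: real) \<noteq> 0" using b0 by simp
  have trm: "x^i * of_int b^n = of_int a^i * of_int b^(n - i) * w^i" if "i \<le> n" for i
  proof -
    have "(of_int b :: real)^n = of_int b^i * of_int b^(n - i)" using that by (simp flip: power_add)
    moreover have "x^i * of_int b^i = (of_int a * w)^i" unfolding x_def using bnz
      by (simp flip: power_mult_distrib)
    ultimately show ?thesis by (simp add: power_mult_distrib algebra_simps)
  qed
  have "0 = poly q x * of_int b ^ n" using q by simp
  also have "\<dots> = (\<Sum>i\<le>n. Polynomial.coeff q i * (x^i * of_int b^n))"
    by (simp add: poly_altdef n_def sum_distrib_right mult.assoc)
  also have "\<dots> = (\<Sum>i\<le>n. Polynomial.coeff q i * (of_int a^i * of_int b^(n - i) * w^i))"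
    by (intro sum.cong refl) (simp add: trm)
  also have "{..n} = insert n {..<n}" by auto
  also have "(\<Sum>i\<in>insert n {..<n}. Polynomial.coeff q i * (of_int a^i * of_int b^(n - i) * w^i))
      = Polynomial.coeff q n * (of_int a^n * of_int b^(n - n) * w^n) + (\<Sum>i<n. Polynomial.coeff q i * (of_int a^i * of_int b^(n - i) * w^i))"
    by (subst sum.insert) auto
  also have "Polynomial.coeff q n = 1" using q unfolding n_def by simp
  also have "(\<Sum>i<n. Polynomial.coeff q i * (of_int a^i * of_int b^(n - i) * w^i))
      = of_int b * (\<Sum>i<n. Polynomial.coeff q i * (of_int a^i * of_int b^(n - i - 1) * w^i))"
    unfolding sum_distrib_left
  proof (intro sum.cong refl)
    fix i assume "i \<in> {..<n}"
    then have "n - i = Suc (n - i - 1)" by simp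
    then have "(of_int b :: real)^(n - i) = of_int b * of_int b^(n - i - 1)" by (metis power_Suc)
    then show "Polynomial.coeff q i * (of_int a^i * of_int b^(n - i) * w^i) = of_int b * (Polynomial.coeff q i * (of_int a^i * of_int b^(n - i - 1) * w^i))"
      by (simp add: algebra_simps)
  qed
  finally have eq: "of_int a^n * w^n = - (of_int b * (\<Sum>i<n. Polynomial.coeff q i * (of_int a^i * of_int b^(n - i - 1) * w^i)))"
    by (simp add: eq_neg_iff_add_eq_0 add.commute)
  define S where "S = (\<Sum>i<n. Polynomial.coeff q i * (of_int a^i * of_int b^(n - i - 1) * w^i))"
  have ZS: "Z S" unfolding S_def by (intro Z_sum Z_mult Z_pow Z_int w(1)) (use q(2) in \<open>auto intro: Z_Ints\<close>)
  have eqS: "of_int a^n * w^n = - (of_int b * S)" using eq unfolding S_def .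
  have "of_int a^n * (w * w')^n = (of_int a^n * w^n) * w'^n" by (simp add: power_mult_distrib mult.assoc)
  also have "\<dots> = - (of_int b * S) * w'^n" unfolding eqS ..
  finally have "of_int a^n * (w * w')^n = - (of_int b * S) * w'^n" .
  then have "of_int (a^n) = of_int b * (- (S * w'^n))" using w(3) by simp
  moreover have "Z (- (S * w'^n))" using ZS w(2) by auto
  ultimately have "M b (of_int (a^n))" unfolding M_def by blast
  then have "b dvd a^n" using M_int_iff[of b "a^n"] by simp
  moreover have "coprime (a^n) b" using cop by simp
  ultimately have "b dvd 1" by (metis coprime_common_divisor dvd_refl)
  then show ?thesis using b0 by simp
qed

end

context wssp begin

lemma main_core:
  assumes nsq: "\<not> (P * P) dvd DD"
  shows "ordm (P * P) = ordm P \<longleftrightarrow> M (P * P) G"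
proof (cases "P dvd DD")
  case True
  then show ?thesis using case_zero[OF True nsq] by blast
next
  case False
  then have "eps = 1 \<or> eps = -1" unfolding eps_def Legendre_def by (auto simp: cong_0_iff)
  then show ?thesis using case_pos case_neg by blast
qed

definition V :: int where "V = k * U k p + 2 * U k (p - 1)"

lemma G_eq: "G = al^p * of_int (V - k)"
proof -
  obtain n where n: "p = Suc n" using p_pos by (cases p) auto
  have ya: "al^p = of_int (U k p) * al + of_int (U k n)" unfolding n by (rule al_pow)
  have yb: "be^p = of_int (U k p) * be + of_int (U k n)" unfolding n by (rule be_pow)
  have "al^p * be^p = (al * be)^p" by (simp add: power_mult_distrib)
  also have "\<dots> = -1" unfolding al_be using p_odd by simp
  finally have ab: "al^p * be^p = -1" .
  have "al^p + be^p = of_int (U k p) * (al + be) + 2 * of_int (U k n)" unfolding ya yb by (simp add: algebra_simps)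
  also have "al + be = of_int k" unfolding be_def by simp
  also have "p - 1 = n" using n by simp
  then have "of_int (U k p) * of_int k + 2 * of_int (U k n) = (of_int V :: real)" unfolding V_def by simp
  finally have sum: "al^p + be^p = of_int V" .
  have "G = al^p * (al^p + be^p - of_int k)" unfolding G_def using ab by (simp add: algebra_simps power2_eq_square)
  then show ?thesis unfolding sum by simp
qed

lemma M_G_iff: "M (P * P) G \<longleftrightarrow> (P * P) dvd (V - k)"
proof
  assume "(P * P) dvd (V - k)"
  then have "M (P * P) (of_int (V - k))" by (rule M_int)
  then show "M (P * P) G" unfolding G_eq by (intro M_multL) auto
next
  assume h: "M (P * P) G"
  have "- (be^p) * al^p = 1"
  proof -
    have "al^p * be^p = (al * be)^p" by (simp add: power_mult_distrib)
    also have "\<dots> = -1" unfolding al_be using p_odd by simp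
    finally show ?thesis by (simp add: algebra_simps)
  qed
  then have "of_int (V - k) = (- (be^p)) * G" unfolding G_eq by (simp add: mult.assoc[symmetric])
  moreover have "M (P * P) ((- (be^p)) * G)" using h by (intro M_multL) auto
  ultimately have "M (P * P) (of_int (V - k))" by simp
  then show "(P * P) dvd (V - k)" using M_int_iff[of "P * P" "V - k"] by simp
qed

lemma alg_iff: "algebraic_int (G / real p ^ 2) \<longleftrightarrow> (P * P) dvd (V - k)"
proof
  assume "(P * P) dvd (V - k)"
  then obtain m where m: "V - k = P * P * m" by blast
  have "G / real p ^ 2 = al^p * of_int m" unfolding G_eq m using p_pos by (simp add: power2_eq_square)
  moreover have "Z (al^p * of_int m)" by auto
  ultimately show "algebraic_int (G / real p ^ 2)" using Z_alg by simp
next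
  assume h: "algebraic_int (G / real p ^ 2)"
  define r where "r = (of_int (V - k) / of_int (P * P) :: real)"
  have "r \<in> \<rat>" unfolding r_def by simp
  then obtain a b where ab: "b > 0" "coprime a b" "r = of_int a / of_int b" by (rule Rats_cases')
  have "G / real p ^ 2 = of_int a / of_int b * al^p" unfolding G_eq ab(3)[symmetric] r_def
    by (simp add: power2_eq_square)
  with h have "algebraic_int (of_int a / of_int b * al^p)" by simp
  moreover have "al^p * (- (be^p)) = 1"
  proof -
    have "al^p * be^p = (al * be)^p" by (simp add: power_mult_distrib)
    also have "\<dots> = -1" unfolding al_be using p_odd by simp
    finally show ?thesis by simp
  qed
  ultimately have "b = 1" using alg_unit[of a b "al^p" "- (be^p)"] ab by auto
  then have "of_int (V - k) = of_int (P * P) * (of_int a :: real)" using ab(3) p_pos unfolding r_def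
    by (simp add: field_simps)
  then have "V - k = P * P * a" by (metis of_int_eq_iff of_int_mult)
  then show "(P * P) dvd (V - k)" by simp
qed

end



lemma nsq_lemma:
  fixes k :: int and p :: nat
  assumes sf: "squarefree ((k\<^sup>2 + 4) div (gcd 2 k)\<^sup>2)" and pp: "prime p" and p3: "p \<ge> 3"
  shows "\<not> (int p * int p) dvd (k^2 + 4)"
proof
  assume h: "(int p * int p) dvd (k^2 + 4)"
  define g where "g = gcd 2 k"
  define D0 where "D0 = (k^2 + 4) div g^2"
  have g2: "g dvd 2" and gk: "g dvd k" unfolding g_def by auto
  have "g^2 dvd k^2" using gk by (rule dvd_power_same)
  moreover have "g^2 dvd 2^2" using g2 by (rule dvd_power_same)
  ultimately have "g^2 dvd k^2 + 4" by simp
  then have DD0: "k^2 + 4 = D0 * g^2" unfolding D0_def by simp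
  have PP: "prime (int p)" using pp by simp
  have "\<not> int p dvd g"
  proof
    assume "int p dvd g"
    then have "int p dvd 2" using g2 by (rule dvd_trans)
    then have "int p \<le> 2" by (rule zdvd_imp_le) simp
    with p3 show False by simp
  qed
  then have "coprime (int p) g" using PP prime_imp_coprime by blast
  then have "coprime (int p * int p) (g^2)" by simp
  then have "(int p * int p) dvd D0" using h unfolding DD0 by (simp add: coprime_dvd_mult_left_iff)
  then have "(int p)^2 dvd D0" by (simp add: power2_eq_square)
  then have "is_unit (int p)" using sf unfolding D0_def g_def squarefree_def by blast
  then show False using PP by simp
qed

theorem lemma3p5:
  fixes k :: int and p :: nat
  assumes "k \<ge> 1" and "\<not> 4 dvd k"
    and "squarefree ((k\<^sup>2 + 4) div (gcd 2 k)\<^sup>2)"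
    and "prime p" and "p \<ge> 3"
  defines "\<alpha> \<equiv> (real_of_int k + sqrt (real_of_int (k\<^sup>2 + 4))) / 2"
  shows "k_wall_sun_sun k p \<longleftrightarrow>
    algebraic_int ((\<alpha> ^ (2 * p) - real_of_int k * \<alpha> ^ p - 1) / real p ^ 2)"
proof -
  interpret wssp k p using assms(1,4,5) by unfold_locales auto
  have aeq: "\<alpha> = al" unfolding \<alpha>_def al_def sq_def DD_def ..
  have Geq: "\<alpha> ^ (2 * p) - real_of_int k * \<alpha> ^ p - 1 = G"
    unfolding aeq G_def by (simp add: power_mult[symmetric] mult.commute)
  have nsq: "\<not> (int p * int p) dvd DD" unfolding DD_def by (rule nsq_lemma[OF assms(3,4,5)])
  have "k_wall_sun_sun k p \<longleftrightarrow> ordm (int p * int p) = ordm (int p)"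
    unfolding k_wall_sun_sun_def pisano_ordm using assms(4) by (simp add: power2_eq_square)
  also have "\<dots> \<longleftrightarrow> M (int p * int p) G" by (rule main_core[OF nsq])
  also have "\<dots> \<longleftrightarrow> (int p * int p) dvd (V - k)" by (rule M_G_iff)
  also have "\<dots> \<longleftrightarrow> algebraic_int (G / real p ^ 2)" by (rule alg_iff[symmetric])
  finally show ?thesis unfolding Geq .
qed

end
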